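(* Let $\lambda=(\lambda_1,\ldots,\lambda_\ell)$ and $\mu$ be partitions. Then \[ h_\lambda[\Xi_\mu] \;=\; \sum_{\pi \,\vdash\!\!\vdash\, \{\!\!\{ 1^{\lambda_1},2^{\lambda_2},\ldots,\ell^{\lambda_\ell}\}\!\!\}} H_{\tilde m(\pi),\mu}, \] where the sum runs over all multiset partitions $\pi$ of the multiset $\{\!\!\{ 1^{\lambda_1},\ldots,\ell^{\lambda_\ell}\}\!\!\}$ and, for partitions $\nu,\mu$, $H_{\nu,\mu}:=\langle h_{|\mu|-|\nu|}h_\nu,\,p_\mu\rangle$.
   Context: $Sym=\mathbb{Q}[p_1,p_2,\ldots]$ is the ring of symmetric functions with power sums $p_k$, complete homogeneous functions $h_\lambda$, and the Hall inner product $\langle\cdot,\cdot\rangle$ with $\langle p_\lambda,p_\mu\rangle=z_\lambda\delta_{\lambda\mu}$; the convention $h_0=1$, $h_{-r}=0$ for $r>0$ is used (so $H_{\nu,\mu}=0$ when $|\nu|>|\mu|$). For $k>0$, $\Xi_k$ denotes the list $1,e^{2\pi i/k},\ldots,e^{2\pi i(k-1)/k}$ of eigenvalues of a $k$-cycle permutation matrix, and for a partition $\mu$, $\Xi_\mu$ is the concatenation of $\Xi_{\mu_1},\ldots,\Xi_{\mu_{\ell(\mu)}}$. For $f\in Sym$, $f[\Xi_\mu]$ is obtained by substituting for each $p_k$ the sum of the $k$-th powers of the entries of $\Xi_\mu$ (equivalently $p_k\mapsto\sum_{d\mid k} d\, m_d(\mu)$, where $m_d(\mu)$ is the number of parts of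 $\mu$ equal to $d$). A multiset partition of a multiset $S$ is a multiset of nonempty multisets whose multiset union is $S$. For a multiset partition $\pi$, $\tilde m(\pi)$ is the partition (of the number of parts of $\pi$) whose parts are the multiplicities with which the distinct multisets occur in $\pi$. *)

theory Defs
  imports Complex_Main "HOL-Library.Multiset" "HOL-Library.Poly_Mapping"
begin

text \<open>Partitions are represented as finite multisets of positive naturals.
  The ring Sym = Q[p_1,p_2,...] is modelled as the monoid ring of the monoid
  (nat multiset, +) over rat: the basis element indexed by a partition rho is
  the power sum product p_rho, and p_rho * p_sigma = p_(rho + sigma).\<close>

type_synonym sym = "nat multiset \<Rightarrow>\<^sub>0 rat"

definition is_partition :: "nat multiset \<Rightarrow> bool" where
  "is_partition \<rho> \<longleftrightarrow> (\<forall>x\<in>#\<rho>. 0 < x)"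

definition partitions_of :: "nat \<Rightarrow> nat multiset set" where
  "partitions_of n = {\<rho>. is_partition \<rho> \<and> sum_mset \<rho> = n}"

definition psym :: "nat multiset \<Rightarrow> sym" where
  "psym \<rho> = Poly_Mapping.single \<rho> 1"

definition zee :: "nat multiset \<Rightarrow> nat" where
  "zee \<rho> = (\<Prod>i\<in>set_mset \<rho>. i ^ count \<rho> i * fact (count \<rho> i))"

definition hsym :: "int \<Rightarrow> sym" where
  "hsym n = (if n < 0 then 0 else
     (\<Sum>\<rho>\<in>partitions_of (nat n). Poly_Mapping.single \<rho> (1 / of_nat (zee \<rho>))))"

definition hpart :: "nat multiset \<Rightarrow> sym" where
  "hpart \<nu> = (\<Prod>k\<in>#\<nu>. hsym (int k))"

definition hall :: "sym \<Rightarrow> sym \<Rightarrow> rat" where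
  "hall f g = (\<Sum>\<rho>\<in>Poly_Mapping.keys f \<inter> Poly_Mapping.keys g. of_nat (zee \<rho>) * Poly_Mapping.lookup f \<rho> * Poly_Mapping.lookup g \<rho>)"

definition pXi :: "nat multiset \<Rightarrow> nat \<Rightarrow> rat" where
  "pXi \<mu> k = of_nat (\<Sum>d\<in>set_mset \<mu>. if d dvd k then d * count \<mu> d else 0)"

text \<open>f[Xi_mu]: the ring homomorphism substituting p_k := p_k[Xi_mu]\<close>
definition evalXi :: "sym \<Rightarrow> nat multiset \<Rightarrow> rat" where
  "evalXi f \<mu> = (\<Sum>\<rho>\<in>Poly_Mapping.keys f. Poly_Mapping.lookup f \<rho> * (\<Prod>k\<in>#\<rho>. pXi \<mu> k))"

definition Hcoef :: "nat multiset \<Rightarrow> nat multiset \<Rightarrow> rat" where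
  "Hcoef \<nu> \<mu> = hall (hsym (int (sum_mset \<mu>) - int (sum_mset \<nu>)) * hpart \<nu>) (psym \<mu>)"

definition multiset_partitions :: "'a multiset \<Rightarrow> 'a multiset multiset set" where
  "multiset_partitions S = {\<pi>. (\<forall>B\<in>#\<pi>. B \<noteq> {#}) \<and> sum_mset \<pi> = S}"

definition mtilde :: "'a multiset multiset \<Rightarrow> nat multiset" where
  "mtilde \<pi> = image_mset (count \<pi>) (mset_set (set_mset \<pi>))"

definition content_mset :: "nat list \<Rightarrow> nat multiset" where
  "content_mset lam = (\<Sum>i<length lam. replicate_mset (lam ! i) (Suc i))"

end

theory Submission
  imports Defs "HOL-Library.FuncSet" "HOL-Computational_Algebra.Formal_Power_Series"
begin


abbreviation lk :: "('a \<Rightarrow>\<^sub>0 'b::zero) \<Rightarrow> 'a \<Rightarrow> 'b" where "lk \<equiv> Poly_Mapping.lookup"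
abbreviation sg :: "'a \<Rightarrow> 'b \<Rightarrow> ('a \<Rightarrow>\<^sub>0 'b::zero)" where "sg \<equiv> Poly_Mapping.single"
abbreviation ks :: "('a \<Rightarrow>\<^sub>0 'b::zero) \<Rightarrow> 'a set" where "ks \<equiv> Poly_Mapping.keys"

lemma finite_multisets_le_size:
  assumes "finite A" shows "finite {X. set_mset X \<subseteq> A \<and> size X \<le> n}"
proof -
  have "{X. set_mset X \<subseteq> A \<and> size X \<le> n} = (\<Union>m\<in>{..n}. multisets_of_size A m)"
    by (auto simp: multisets_of_size_def)
  thus ?thesis using assms by auto
qed

lemma size_le_sum_mset: "(\<forall>x\<in>#\<rho>. (0::nat) < x) \<Longrightarrow> size \<rho> \<le> sum_mset \<rho>"
  by (induction \<rho>) auto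

lemma mem_le_sum_mset: "x \<in># (\<rho>::nat multiset) \<Longrightarrow> x \<le> sum_mset \<rho>"
  by (induction \<rho>) auto

lemma finite_partitions_of: "finite (partitions_of n)"
proof -
  have "partitions_of n \<subseteq> {X. set_mset X \<subseteq> {1..n} \<and> size X \<le> n}"
  proof
    fix \<rho> assume "\<rho> \<in> partitions_of n"
    hence p: "\<forall>x\<in>#\<rho>. 0 < x" and s: "sum_mset \<rho> = n" by (auto simp: partitions_of_def is_partition_def)
    have "\<forall>x\<in>#\<rho>. x \<le> n" using s mem_le_sum_mset by blast
    moreover have "size \<rho> \<le> n" using size_le_sum_mset[OF p] s by simp
    ultimately show "\<rho> \<in> {X. set_mset X \<subseteq> {1..n} \<and> size X \<le> n}" using p by force
  qed
  thus ?thesis by (rule finite_subset) (rule finite_multisets_le_size, simp)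
qed

lemma lookup_hsym:
  "lk (hsym n) \<rho> = (if 0 \<le> n \<and> is_partition \<rho> \<and> sum_mset \<rho> = nat n then 1 / of_nat (zee \<rho>) else 0)"
proof -
  have fin: "finite {\<rho>. is_partition \<rho> \<and> sum_mset \<rho> = m}" for m
    using finite_partitions_of[of m] by (simp add: partitions_of_def)
  show ?thesis unfolding hsym_def
    by (auto simp: lookup_sum lookup_single partitions_of_def when_def fin sum.delta)
qed

lemma hsym_neg: "n < 0 \<Longrightarrow> hsym n = 0"
  by (simp add: hsym_def)

lemma hsym_0: "hsym 0 = 1"
proof (rule poly_mapping_eqI)
  fix \<rho>
  have "is_partition \<rho> \<and> sum_mset \<rho> = 0 \<longleftrightarrow> \<rho> = {#}"
    by (cases \<rho>) (auto simp: is_partition_def)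
  thus "lk (hsym 0) \<rho> = lk 1 \<rho>"
    by (auto simp: lookup_hsym lookup_one when_def zee_def)
qed

lemma zee_add: "zee (add_mset d \<mu>) = zee \<mu> * d * (count \<mu> d + 1)"
proof (cases "d \<in># \<mu>")
  case True
  let ?f = "\<lambda>\<mu> i. i ^ count \<mu> i * fact (count \<mu> i) :: nat"
  have "zee (add_mset d \<mu>) = ?f (add_mset d \<mu>) d * (\<Prod>i\<in>set_mset \<mu> - {d}. ?f (add_mset d \<mu>) i)"
    unfolding zee_def using True by (simp add: insert_absorb prod.remove)
  also have "(\<Prod>i\<in>set_mset \<mu> - {d}. ?f (add_mset d \<mu>) i) = (\<Prod>i\<in>set_mset \<mu> - {d}. ?f \<mu> i)"
    by (rule prod.cong) auto
  also have "?f (add_mset d \<mu>) d = ?f \<mu> d * (d * (count \<mu> d + 1))"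
    by (simp add: fact_Suc algebra_simps)
  also have "zee \<mu> = ?f \<mu> d * (\<Prod>i\<in>set_mset \<mu> - {d}. ?f \<mu> i)"
    unfolding zee_def using True by (simp add: prod.remove)
  ultimately show ?thesis by (simp add: algebra_simps)
next
  case False
  let ?f = "\<lambda>\<mu> i. i ^ count \<mu> i * fact (count \<mu> i) :: nat"
  have "zee (add_mset d \<mu>) = ?f (add_mset d \<mu>) d * (\<Prod>i\<in>set_mset \<mu>. ?f (add_mset d \<mu>) i)"
    unfolding zee_def using False by simp
  also have "(\<Prod>i\<in>set_mset \<mu>. ?f (add_mset d \<mu>) i) = zee \<mu>"
    unfolding zee_def using False by (intro prod.cong) auto
  finally show ?thesis using False by (simp add: not_in_iff)
qed

lemma zee_pos: "is_partition \<mu> \<Longrightarrow> 0 < zee \<mu>"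
  unfolding zee_def is_partition_def by (auto intro!: prod_pos)

lemma hall_psym: "hall f (psym \<mu>) = of_nat (zee \<mu>) * lk f \<mu>"
  unfolding hall_def psym_def
  by (cases "\<mu> \<in> ks f") (auto simp: in_keys_iff)




definition Dop :: "nat \<Rightarrow> sym \<Rightarrow> sym" where
  "Dop d f = Abs_poly_mapping (\<lambda>\<sigma>. of_nat (d * (count \<sigma> d + 1)) * lk f (add_mset d \<sigma>))"

lemma lookup_Dop: "lk (Dop d f) \<sigma> = of_nat (d * (count \<sigma> d + 1)) * lk f (add_mset d \<sigma>)"
proof -
  have "{\<sigma>. of_nat (d * (count \<sigma> d + 1)) * lk f (add_mset d \<sigma>) \<noteq> (0::rat)} \<subseteq> (\<lambda>\<rho>. \<rho> - {#d#}) ` ks f"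
  proof
    fix \<sigma> assume "\<sigma> \<in> {\<sigma>. of_nat (d * (count \<sigma> d + 1)) * lk f (add_mset d \<sigma>) \<noteq> (0::rat)}"
    hence "add_mset d \<sigma> \<in> ks f" by (auto simp: in_keys_iff)
    thus "\<sigma> \<in> (\<lambda>\<rho>. \<rho> - {#d#}) ` ks f" by (rule rev_image_eqI) simp
  qed
  hence "finite {\<sigma>. of_nat (d * (count \<sigma> d + 1)) * lk f (add_mset d \<sigma>) \<noteq> (0::rat)}"
    by (rule finite_subset) simp
  thus ?thesis unfolding Dop_def by simp
qed

lemma Dop_add: "Dop d (f + g) = Dop d f + Dop d g"
  by (rule poly_mapping_eqI) (simp add: lookup_Dop lookup_add algebra_simps)

lemma Dop_zero: "Dop d 0 = 0"
  by (rule poly_mapping_eqI) (simp add: lookup_Dop)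

lemma Dop_sum: "Dop d (\<Sum>i\<in>A. f i) = (\<Sum>i\<in>A. Dop d (f i))"
  by (induction A rule: infinite_finite_induct) (auto simp: Dop_zero Dop_add)

lemma Dop_single: "Dop d (sg \<rho> a) = sg (\<rho> - {#d#}) (a * of_nat (d * count \<rho> d))"
proof (rule poly_mapping_eqI)
  fix \<sigma>
  show "lk (Dop d (sg \<rho> a)) \<sigma> = lk (sg (\<rho> - {#d#}) (a * of_nat (d * count \<rho> d))) \<sigma>"
  proof (cases "d \<in># \<rho>")
    case True
    then obtain \<tau> where t: "\<rho> = add_mset d \<tau>" by (metis insert_DiffM)
    show ?thesis by (auto simp: lookup_Dop lookup_single when_def t)
  next
    case False
    hence "\<rho> \<noteq> add_mset d \<sigma>" by auto
    thus ?thesis using False by (simp add: lookup_Dop lookup_single when_def not_in_iff)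
  qed
qed

lemma pm_expand: "f = (\<Sum>k\<in>ks f. sg k (lk f k))"
  by (rule poly_mapping_eqI) (auto simp: lookup_sum lookup_single when_def sum.delta in_keys_iff)

lemma Dop_mult_single:
  "Dop d (sg a x * sg b y) = Dop d (sg a x) * sg b y + sg a x * Dop d (sg b y)"
proof -
  have 1: "Dop d (sg a x) * sg b y = sg (a + b - {#d#}) (x * y * of_nat (d * count a d))"
    by (cases "d \<in># a") (auto simp: Dop_single mult_single not_in_iff ac_simps)
  have 2: "sg a x * Dop d (sg b y) = sg (a + b - {#d#}) (x * y * of_nat (d * count b d))"
    by (cases "d \<in># b") (auto simp: Dop_single mult_single not_in_iff ac_simps)
  show ?thesis unfolding 1 2
    by (simp add: mult_single Dop_single single_add[symmetric] algebra_simps)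
qed

lemma Dop_mult: "Dop d (f * g) = Dop d f * g + f * Dop d g"
proof -
  have ef: "f = (\<Sum>k\<in>ks f. sg k (lk f k))" by (rule pm_expand)
  have eg: "g = (\<Sum>k\<in>ks g. sg k (lk g k))" by (rule pm_expand)
  have D1: "Dop d f = (\<Sum>k\<in>ks f. Dop d (sg k (lk f k)))"
    using arg_cong[OF ef, of "Dop d"] by (simp only: Dop_sum)
  have D2: "Dop d g = (\<Sum>k\<in>ks g. Dop d (sg k (lk g k)))"
    using arg_cong[OF eg, of "Dop d"] by (simp only: Dop_sum)
  have "f * g = (\<Sum>k\<in>ks f. sg k (lk f k)) * (\<Sum>k\<in>ks g. sg k (lk g k))"
    using ef eg by metis
  hence "f * g = (\<Sum>k\<in>ks f. \<Sum>l\<in>ks g. sg k (lk f k) * sg l (lk g l))"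
    by (simp add: sum_product)
  hence "Dop d (f * g) = (\<Sum>k\<in>ks f. \<Sum>l\<in>ks g. Dop d (sg k (lk f k)) * sg l (lk g l)
      + sg k (lk f k) * Dop d (sg l (lk g l)))"
    by (simp add: Dop_sum Dop_mult_single)
  also have "\<dots> = (\<Sum>k\<in>ks f. Dop d (sg k (lk f k))) * (\<Sum>k\<in>ks g. sg k (lk g k))
     + (\<Sum>k\<in>ks f. sg k (lk f k)) * (\<Sum>k\<in>ks g. Dop d (sg k (lk g k)))"
    by (simp add: sum_product sum.distrib)
  also have "\<dots> = Dop d f * g + f * Dop d g"
    using D1 D2 ef eg by metis
  finally show ?thesis .
qed

lemma Dop_one: "Dop d 1 = 0"
  by (rule poly_mapping_eqI) (simp add: lookup_Dop lookup_one when_def)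

lemma Dop_prod: "finite A \<Longrightarrow> Dop d (\<Prod>i\<in>A. f i) = (\<Sum>i\<in>A. Dop d (f i) * (\<Prod>j\<in>A - {i}. f j))"
proof (induction A rule: finite_induct)
  case empty thus ?case by (simp add: Dop_one)
next
  case (insert x A)
  have "(\<Sum>i\<in>insert x A. Dop d (f i) * (\<Prod>j\<in>insert x A - {i}. f j))
     = Dop d (f x) * (\<Prod>j\<in>A. f j) + (\<Sum>i\<in>A. Dop d (f i) * (\<Prod>j\<in>insert x A - {i}. f j))"
    using insert by (simp add: sum.insert)
  also have "(\<Sum>i\<in>A. Dop d (f i) * (\<Prod>j\<in>insert x A - {i}. f j)) = f x * (\<Sum>i\<in>A. Dop d (f i) * (\<Prod>j\<in>A - {i}. f j))"
    unfolding sum_distrib_left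
  proof (rule sum.cong)
    fix i assume "i \<in> A"
    hence "insert x A - {i} = insert x (A - {i})" using insert by auto
    thus "Dop d (f i) * (\<Prod>j\<in>insert x A - {i}. f j) = f x * (Dop d (f i) * (\<Prod>j\<in>A - {i}. f j))"
      using insert by (simp add: algebra_simps)
  qed simp
  finally show ?case using insert by (simp add: Dop_mult algebra_simps)
qed

lemma Dop_hsym: assumes "0 < d" shows "Dop d (hsym n) = hsym (n - int d)"
proof (rule poly_mapping_eqI)
  fix \<sigma>
  have cond: "(0 \<le> n \<and> is_partition (add_mset d \<sigma>) \<and> sum_mset (add_mset d \<sigma>) = nat n)
     = (0 \<le> n - int d \<and> is_partition \<sigma> \<and> sum_mset \<sigma> = nat (n - int d))"
    using assms by (auto simp: is_partition_def)
  have L: "lk (Dop d (hsym n)) \<sigma> = of_nat (d * (count \<sigma> d + 1)) *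
     (if 0 \<le> n - int d \<and> is_partition \<sigma> \<and> sum_mset \<sigma> = nat (n - int d) then 1 / of_nat (zee (add_mset d \<sigma>)) else 0)"
    by (simp only: lookup_Dop lookup_hsym cond)
  show "lk (Dop d (hsym n)) \<sigma> = lk (hsym (n - int d)) \<sigma>"
  proof (cases "0 \<le> n - int d \<and> is_partition \<sigma> \<and> sum_mset \<sigma> = nat (n - int d)")
    case True
    have z: "0 < zee \<sigma>" using zee_pos True by blast
    have "d * (count \<sigma> d + 1) \<noteq> 0" using assms by simp
    hence nz: "rat_of_nat (d * (count \<sigma> d + 1)) \<noteq> 0" by (metis of_nat_eq_0_iff)
    have "rat_of_nat (zee (add_mset d \<sigma>)) = rat_of_nat (d * (count \<sigma> d + 1)) * rat_of_nat (zee \<sigma>)"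
      by (simp only: zee_add of_nat_mult ac_simps)
    hence "lk (Dop d (hsym n)) \<sigma> = 1 / rat_of_nat (zee \<sigma>)" using L True nz by simp
    thus ?thesis using True by (simp only: lookup_hsym if_True) simp
  next
    case False
    thus ?thesis using L by (simp only: lookup_hsym if_False)
  qed
qed

lemma hall_psym_add: "hall f (psym (add_mset d \<mu>)) = hall (Dop d f) (psym \<mu>)"
  by (simp add: hall_psym lookup_Dop zee_add algebra_simps)




definition HH :: "nat multiset multiset \<Rightarrow> nat multiset \<Rightarrow> rat" where
  "HH \<pi> \<mu> = hall (hsym (int (sum_mset \<mu>) - int (size \<pi>)) * (\<Prod>B\<in>set_mset \<pi>. hsym (int (count \<pi> B)))) (psym \<mu>)"

lemma size_as_sum: "size \<pi> = (\<Sum>B\<in>set_mset \<pi>. count \<pi> B)"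
  by (simp add: size_multiset_overloaded_eq)

lemma Hcoef_mtilde: "Hcoef (mtilde \<pi>) \<mu> = HH \<pi> \<mu>"
proof -
  have s: "sum_mset (mtilde \<pi>) = size \<pi>"
    unfolding mtilde_def size_as_sum by (simp add: sum_unfold_sum_mset)
  have p: "hpart (mtilde \<pi>) = (\<Prod>B\<in>set_mset \<pi>. hsym (int (count \<pi> B)))"
    unfolding hpart_def mtilde_def by (simp add: prod_unfold_prod_mset image_mset.compositionality o_def)
  show ?thesis unfolding Hcoef_def HH_def s p ..
qed

lemma count_diff_rep: "count (\<pi> - replicate_mset d B) C = (if C = B then count \<pi> B - d else count \<pi> C)"
  by simp

lemma prod_remove_rep:
  assumes "B \<in># \<pi>" "d \<le> count \<pi> B"
  shows "(\<Prod>C\<in>set_mset (\<pi> - replicate_mset d B). hsym (int (count (\<pi> - replicate_mset d B) C)))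
       = hsym (int (count \<pi> B - d)) * (\<Prod>C\<in>set_mset \<pi> - {B}. hsym (int (count \<pi> C)))"
proof (cases "count \<pi> B = d")
  case True
  have st: "set_mset (\<pi> - replicate_mset d B) = set_mset \<pi> - {B}"
    using True assms by (auto simp: in_diff_count split: if_splits)
  show ?thesis unfolding st using True by (auto simp: hsym_0 intro!: prod.cong)
next
  case False
  hence st: "set_mset (\<pi> - replicate_mset d B) = set_mset \<pi>"
    using assms by (auto simp: in_diff_count split: if_splits)
  have "(\<Prod>C\<in>set_mset \<pi>. hsym (int (count (\<pi> - replicate_mset d B) C)))
     = hsym (int (count (\<pi> - replicate_mset d B) B)) * (\<Prod>C\<in>set_mset \<pi> - {B}. hsym (int (count (\<pi> - replicate_mset d B) C)))"
    using assms by (simp add: prod.remove)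
  also have "(\<Prod>C\<in>set_mset \<pi> - {B}. hsym (int (count (\<pi> - replicate_mset d B) C))) = (\<Prod>C\<in>set_mset \<pi> - {B}. hsym (int (count \<pi> C)))"
    by (rule prod.cong) auto
  finally show ?thesis unfolding st by simp
qed

lemma hall_add: "hall (f + g) (psym \<mu>) = hall f (psym \<mu>) + hall g (psym \<mu>)"
  by (simp add: hall_psym lookup_add algebra_simps)

lemma hall_sum: "hall (\<Sum>i\<in>A. f i) (psym \<mu>) = (\<Sum>i\<in>A. hall (f i) (psym \<mu>))"
  by (simp add: hall_psym lookup_sum sum_distrib_left)

lemma HH_rec:
  assumes "0 < d"
  shows "HH \<pi> (add_mset d \<mu>) = HH \<pi> \<mu> +
     (\<Sum>B\<in>set_mset \<pi>. if d \<le> count \<pi> B then HH (\<pi> - replicate_mset d B) \<mu> else 0)"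
proof -
  define N where "N = sum_mset \<mu>"
  define P where "P = (\<Prod>B\<in>set_mset \<pi>. hsym (int (count \<pi> B)))"
  have "HH \<pi> (add_mset d \<mu>) = hall (Dop d (hsym (int (N + d) - int (size \<pi>)) * P)) (psym \<mu>)"
    unfolding HH_def P_def N_def by (simp add: hall_psym_add add.commute)
  also have "Dop d (hsym (int (N + d) - int (size \<pi>)) * P)
     = hsym (int N - int (size \<pi>)) * P +
       (\<Sum>B\<in>set_mset \<pi>. hsym (int (N + d) - int (size \<pi>)) * (hsym (int (count \<pi> B) - int d) * (\<Prod>C\<in>set_mset \<pi> - {B}. hsym (int (count \<pi> C)))))"
    unfolding Dop_mult P_def using assms
    by (simp add: Dop_prod Dop_hsym sum_distrib_left)
  also have "hall (\<dots>) (psym \<mu>) = HH \<pi> \<mu> + (\<Sum>B\<in>set_mset \<pi>. if d \<le> count \<pi> B then HH (\<pi> - replicate_mset d B) \<mu> else 0)"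
  proof -
    have A: "hall (hsym (int N - int (size \<pi>)) * P) (psym \<mu>) = HH \<pi> \<mu>"
      unfolding HH_def N_def P_def by (rule refl)
    have Bt: "hall (hsym (int (N + d) - int (size \<pi>)) * (hsym (int (count \<pi> B) - int d) * (\<Prod>C\<in>set_mset \<pi> - {B}. hsym (int (count \<pi> C))))) (psym \<mu>)
         = (if d \<le> count \<pi> B then HH (\<pi> - replicate_mset d B) \<mu> else 0)" if B: "B \<in> set_mset \<pi>" for B
    proof (cases "d \<le> count \<pi> B")
      case True
      have sub: "replicate_mset d B \<subseteq># \<pi>" using True by (simp add: count_le_replicate_mset_subset_eq[symmetric])
      have sz: "size (\<pi> - replicate_mset d B) = size \<pi> - d"
        using sub by (simp add: size_Diff_submset)
      have "size \<pi> \<ge> d" using size_mset_mono[OF sub] by simp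
      hence e1: "int (N + d) - int (size \<pi>) = int (sum_mset \<mu>) - int (size (\<pi> - replicate_mset d B))"
        unfolding sz N_def by simp
      have e2: "int (count \<pi> B) - int d = int (count \<pi> B - d)" using True by simp
      show ?thesis using True unfolding HH_def prod_remove_rep[OF B True] e1 e2 by simp
    next
      case False
      hence "int (count \<pi> B) - int d < 0" by simp
      thus ?thesis using False by (simp add: hsym_neg hall_psym)
    qed
    show ?thesis unfolding hall_add hall_sum A using Bt by (intro arg_cong2[where f="(+)"] refl sum.cong) auto
  qed
  finally show ?thesis .
qed




definition RR :: "nat multiset \<Rightarrow> nat multiset \<Rightarrow> rat" where
  "RR S \<mu> = (\<Sum>\<pi>\<in>multiset_partitions S. HH \<pi> \<mu>)"

lemma mem_sub_sum_mset: "B \<in># \<pi> \<Longrightarrow> B \<subseteq># sum_mset (\<pi> :: 'a multiset multiset)"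
proof (induction \<pi>)
  case empty thus ?case by simp
next
  case (add C \<pi>)
  show ?case
  proof (cases "B = C")
    case True thus ?thesis by simp
  next
    case False
    hence "B \<subseteq># sum_mset \<pi>" using add by simp
    thus ?thesis by (simp add: subset_mset.add_increasing)
  qed
qed

lemma size_le_size_sum: "(\<forall>B\<in>#\<pi>. B \<noteq> {#}) \<Longrightarrow> size \<pi> \<le> size (sum_mset (\<pi> :: 'a multiset multiset))"
proof (induction \<pi>)
  case empty thus ?case by simp
next
  case (add C \<pi>)
  hence "size C \<ge> 1" by (simp add: Suc_le_eq nonempty_has_size)
  thus ?case using add by simp
qed

lemma finite_submsets: "finite {B. B \<subseteq># (S :: 'a multiset)}"
proof -
  have "{B. B \<subseteq># S} \<subseteq> {X. set_mset X \<subseteq> set_mset S \<and> size X \<le> size S}"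
    by (auto dest: set_mset_mono size_mset_mono)
  thus ?thesis by (rule finite_subset) (rule finite_multisets_le_size, simp)
qed

lemma finite_MP: "finite (multiset_partitions (S :: 'a multiset))"
proof -
  have "multiset_partitions S \<subseteq> {X. set_mset X \<subseteq> {B. B \<subseteq># S} \<and> size X \<le> size S}"
    by (auto simp: multiset_partitions_def intro: mem_sub_sum_mset size_le_size_sum)
  thus ?thesis by (rule finite_subset) (rule finite_multisets_le_size, rule finite_submsets)
qed

lemma sum_rep: "sum_mset (replicate_mset d B) = repeat_mset d B"
  by (induction d) auto

lemma HH_empty: "HH \<pi> {#} = (if \<pi> = {#} then 1 else 0)"
proof (cases "\<pi> = {#}")
  case True thus ?thesis by (simp add: HH_def hall_psym hsym_0 zee_def)
next
  case False
  hence "int (sum_mset {#}) - int (size \<pi>) < 0" by (simp add: nonempty_has_size)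
  thus ?thesis using False by (simp add: HH_def hsym_neg hall_psym)
qed

lemma RR_empty: "RR S {#} = (if S = {#} then 1 else 0)"
proof -
  have "{#} \<in> multiset_partitions S \<longleftrightarrow> S = {#}" by (auto simp: multiset_partitions_def)
  thus ?thesis unfolding RR_def HH_empty using finite_MP[of S] by (simp add: sum.delta)
qed

lemma RR_rec:
  assumes d: "0 < d"
  shows "RR S (add_mset d \<mu>) = (\<Sum>B\<in>{B. repeat_mset d B \<subseteq># S}. RR (S - repeat_mset d B) \<mu>)"
proof -
  define MP where "MP = multiset_partitions S"
  define Bs where "Bs = {B. B \<noteq> {#} \<and> repeat_mset d B \<subseteq># S}"
  define Sg where "Sg = Sigma MP (\<lambda>\<pi>. {B\<in>set_mset \<pi>. d \<le> count \<pi> B})"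
  define Tg where "Tg = Sigma Bs (\<lambda>B. multiset_partitions (S - repeat_mset d B))"
  have finMP: "finite MP" unfolding MP_def by (rule finite_MP)
  have subrep: "{B. repeat_mset d B \<subseteq># S} \<subseteq> {B. B \<subseteq># S}"
  proof
    fix B assume "B \<in> {B. repeat_mset d B \<subseteq># S}"
    moreover have "B \<subseteq># repeat_mset d B" using d by (cases d) auto
    ultimately show "B \<in> {B. B \<subseteq># S}" by auto
  qed
  have finR: "finite {B. repeat_mset d B \<subseteq># S}" using subrep finite_submsets finite_subset by blast
  have finBs: "finite Bs" unfolding Bs_def by (rule finite_subset[OF _ finR]) auto
  have "RR S (add_mset d \<mu>) = RR S \<mu> +
     (\<Sum>\<pi>\<in>MP. \<Sum>B\<in>set_mset \<pi>. if d \<le> count \<pi> B then HH (\<pi> - replicate_mset d B) \<mu> else 0)"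
    unfolding RR_def MP_def by (simp add: HH_rec[OF d] sum.distrib)
  also have "(\<Sum>\<pi>\<in>MP. \<Sum>B\<in>set_mset \<pi>. if d \<le> count \<pi> B then HH (\<pi> - replicate_mset d B) \<mu> else 0)
     = (\<Sum>\<pi>\<in>MP. \<Sum>B\<in>{B\<in>set_mset \<pi>. d \<le> count \<pi> B}. HH (\<pi> - replicate_mset d B) \<mu>)"
    by (simp add: sum.inter_filter)
  also have "\<dots> = (\<Sum>(\<pi>,B)\<in>Sg. HH (\<pi> - replicate_mset d B) \<mu>)"
    unfolding Sg_def using finMP by (subst sum.Sigma) auto
  also have "\<dots> = (\<Sum>(B,\<pi>')\<in>Tg. HH \<pi>' \<mu>)"
  proof (rule sum.reindex_bij_witness[where j = "\<lambda>(\<pi>,B). (B, \<pi> - replicate_mset d B)"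
        and i = "\<lambda>(B,\<pi>'). (\<pi>' + replicate_mset d B, B)"])
    fix a assume "a \<in> Sg"
    then obtain \<pi> B where a: "a = (\<pi>, B)" and \<pi>: "\<pi> \<in> multiset_partitions S" and B: "B \<in># \<pi>"
      and c: "d \<le> count \<pi> B" unfolding Sg_def MP_def by auto
    have sub: "replicate_mset d B \<subseteq># \<pi>" using c by (simp add: count_le_replicate_mset_subset_eq[symmetric])
    hence eq: "\<pi> - replicate_mset d B + replicate_mset d B = \<pi>" by (simp add: subset_mset.diff_add)
    show "(\<lambda>(B,\<pi>'). (\<pi>' + replicate_mset d B, B)) ((\<lambda>(\<pi>,B). (B, \<pi> - replicate_mset d B)) a) = a"
      using a eq by simp
    have sS: "sum_mset \<pi> = S" and ne: "\<forall>C\<in>#\<pi>. C \<noteq> {#}" using \<pi> by (auto simp: multiset_partitions_def)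
    have sS2: "sum_mset (\<pi> - replicate_mset d B) + repeat_mset d B = S"
      using arg_cong[OF eq, of sum_mset] sS by (simp add: sum_rep)
    have "B \<noteq> {#}" using ne B by auto
    moreover have "repeat_mset d B \<subseteq># S" using sS2 by (metis mset_subset_eq_add_right)
    moreover have "\<pi> - replicate_mset d B \<in> multiset_partitions (S - repeat_mset d B)"
      using sS2 ne by (auto simp: multiset_partitions_def dest: in_diffD)
    ultimately show "(\<lambda>(\<pi>,B). (B, \<pi> - replicate_mset d B)) a \<in> Tg"
      unfolding Tg_def Bs_def a by simp
    show "(\<lambda>(B,\<pi>'). HH \<pi>' \<mu>) ((\<lambda>(\<pi>,B). (B, \<pi> - replicate_mset d B)) a) = (\<lambda>(\<pi>,B). HH (\<pi> - replicate_mset d B) \<mu>) a"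
      using a by simp
  next
    fix b assume "b \<in> Tg"
    then obtain B \<pi>' where b: "b = (B, \<pi>')" and B: "B \<noteq> {#}" and sub: "repeat_mset d B \<subseteq># S"
      and \<pi>': "\<pi>' \<in> multiset_partitions (S - repeat_mset d B)" unfolding Tg_def Bs_def by auto
    show "(\<lambda>(\<pi>,B). (B, \<pi> - replicate_mset d B)) ((\<lambda>(B,\<pi>'). (\<pi>' + replicate_mset d B, B)) b) = b"
      using b by simp
    have "sum_mset (\<pi>' + replicate_mset d B) = S"
      using \<pi>' sub by (simp add: multiset_partitions_def sum_rep subset_mset.diff_add)
    moreover have "\<forall>C\<in>#\<pi>' + replicate_mset d B. C \<noteq> {#}"
      using \<pi>' B by (auto simp: multiset_partitions_def)
    moreover have "B \<in># \<pi>' + replicate_mset d B" using d by simp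
    ultimately show "(\<lambda>(B,\<pi>'). (\<pi>' + replicate_mset d B, B)) b \<in> Sg"
      unfolding Sg_def MP_def b by (simp add: multiset_partitions_def)
  qed
  also have "\<dots> = (\<Sum>B\<in>Bs. RR (S - repeat_mset d B) \<mu>)"
    unfolding Tg_def RR_def using finBs by (subst sum.Sigma) (auto simp: finite_MP)
  finally have 1: "RR S (add_mset d \<mu>) = RR S \<mu> + (\<Sum>B\<in>Bs. RR (S - repeat_mset d B) \<mu>)" .
  have "{B. repeat_mset d B \<subseteq># S} = insert {#} Bs" unfolding Bs_def by auto
  moreover have "{#} \<notin> Bs" unfolding Bs_def by simp
  ultimately show ?thesis using 1 finBs by simp
qed




definition WW :: "nat multiset \<Rightarrow> nat multiset \<Rightarrow> rat" where
  "WW \<mu> \<rho> = (\<Prod>k\<in>#\<rho>. pXi \<mu> k)"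

lemma evalXi_WW: "evalXi f \<mu> = (\<Sum>\<rho>\<in>ks f. lk f \<rho> * WW \<mu> \<rho>)"
  unfolding evalXi_def WW_def by (rule refl)

lemma evalXi_sup: "finite A \<Longrightarrow> ks f \<subseteq> A \<Longrightarrow> evalXi f \<mu> = (\<Sum>\<rho>\<in>A. lk f \<rho> * WW \<mu> \<rho>)"
  unfolding evalXi_WW by (rule sum.mono_neutral_left) (auto simp: in_keys_iff)

lemma evalXi_add: "evalXi (f + g) \<mu> = evalXi f \<mu> + evalXi g \<mu>"
proof -
  have fin: "finite (ks f \<union> ks g)" by simp
  have "ks (f + g) \<subseteq> ks f \<union> ks g" by (rule keys_add)
  thus ?thesis
    using evalXi_sup[OF fin, of "f+g"] evalXi_sup[OF fin, of f] evalXi_sup[OF fin, of g]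
    by (simp add: lookup_add algebra_simps sum.distrib)
qed

lemma evalXi_zero: "evalXi 0 \<mu> = 0"
  by (simp add: evalXi_def)

lemma evalXi_sum: "evalXi (\<Sum>i\<in>A. f i) \<mu> = (\<Sum>i\<in>A. evalXi (f i) \<mu>)"
  by (induction A rule: infinite_finite_induct) (auto simp: evalXi_zero evalXi_add)

lemma evalXi_single: "evalXi (sg \<rho> a) \<mu> = a * WW \<mu> \<rho>"
  by (cases "a = 0") (simp_all add: evalXi_WW)

lemma WW_add: "WW \<mu> (\<rho> + \<sigma>) = WW \<mu> \<rho> * WW \<mu> \<sigma>"
  by (simp add: WW_def)

lemma evalXi_mult: "evalXi (f * g) \<mu> = evalXi f \<mu> * evalXi g \<mu>"
proof -
  have ef: "f = (\<Sum>k\<in>ks f. sg k (lk f k))" by (rule pm_expand)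
  have eg: "g = (\<Sum>k\<in>ks g. sg k (lk g k))" by (rule pm_expand)
  have "f * g = (\<Sum>k\<in>ks f. sg k (lk f k)) * (\<Sum>k\<in>ks g. sg k (lk g k))"
    by (rule arg_cong2[OF ef eg])
  hence "f * g = (\<Sum>k\<in>ks f. \<Sum>l\<in>ks g. sg (k + l) (lk f k * lk g l))"
    by (simp add: sum_product mult_single)
  hence "evalXi (f * g) \<mu> = (\<Sum>k\<in>ks f. \<Sum>l\<in>ks g. (lk f k * WW \<mu> k) * (lk g l * WW \<mu> l))"
    by (simp add: evalXi_sum evalXi_single WW_add algebra_simps)
  also have "\<dots> = evalXi f \<mu> * evalXi g \<mu>"
    unfolding evalXi_WW by (simp add: sum_product)
  finally show ?thesis .
qed

lemma evalXi_one: "evalXi 1 \<mu> = 1"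
proof -
  show ?thesis using evalXi_single[of "{#}" 1 \<mu>] by (simp add: WW_def)
qed

lemma evalXi_prod_list: "evalXi (\<Prod>k\<leftarrow>lam. f k) \<mu> = (\<Prod>k\<leftarrow>lam. evalXi (f k) \<mu>)"
  by (induction lam) (auto simp: evalXi_one evalXi_mult)

lemma evalXi_scale:
  assumes "\<And>\<rho>. lk g \<rho> = c * lk f \<rho>"
  shows "evalXi g \<mu> = c * evalXi f \<mu>"
proof -
  have "ks g \<subseteq> ks f" using assms by (auto simp: in_keys_iff)
  hence "evalXi g \<mu> = (\<Sum>\<rho>\<in>ks f. lk g \<rho> * WW \<mu> \<rho>)" by (rule evalXi_sup[rotated]) simp
  thus ?thesis by (simp add: evalXi_WW assms sum_distrib_left algebra_simps)
qed

lemma evalXi_psym1: "evalXi (psym {#k#}) \<mu> = pXi \<mu> k"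
  by (simp add: psym_def evalXi_single WW_def)

lemma lookup_single_mult: "lk (sg {#k#} x * g) \<rho> = (if k \<in># \<rho> then x * lk g (\<rho> - {#k#}) else 0)"
proof -
  have eg: "g = (\<Sum>q\<in>ks g. sg q (lk g q))" by (rule pm_expand)
  have "sg {#k#} x * g = sg {#k#} x * (\<Sum>q\<in>ks g. sg q (lk g q))"
    using arg_cong[OF eg, of "\<lambda>g. sg {#k#} x * g"] .
  also have "\<dots> = (\<Sum>q\<in>ks g. sg ({#k#} + q) (x * lk g q))"
    by (simp only: sum_distrib_left mult_single)
  finally have "sg {#k#} x * g = (\<Sum>q\<in>ks g. sg ({#k#} + q) (x * lk g q))" .
  hence "lk (sg {#k#} x * g) \<rho> = (\<Sum>q\<in>ks g. if q = \<rho> - {#k#} \<and> k \<in># \<rho> then x * lk g q else 0)"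
    by (auto simp: lookup_sum lookup_single when_def intro!: sum.cong)
  also have "\<dots> = (if k \<in># \<rho> then x * lk g (\<rho> - {#k#}) else 0)"
    by (cases "k \<in># \<rho>") (auto simp: sum.delta in_keys_iff)
  finally show ?thesis .
qed

lemma sum_mset_count: "finite A \<Longrightarrow> set_mset \<rho> \<subseteq> A \<Longrightarrow> sum_mset \<rho> = (\<Sum>k\<in>A. k * count \<rho> k)"
proof (induction \<rho>)
  case empty thus ?case by simp
next
  case (add x \<rho>)
  have "(\<Sum>k\<in>A. k * count (add_mset x \<rho>) k) = (\<Sum>k\<in>A. k * count \<rho> k + (if k = x then x else 0))"
    by (rule sum.cong) auto
  also have "\<dots> = (\<Sum>k\<in>A. k * count \<rho> k) + x" using add by (simp add: sum.distrib sum.delta)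
  finally show ?case using add by simp
qed

lemma newton_lookup:
  assumes n: "0 < n"
  shows "lk (\<Sum>k\<in>{1..n}. psym {#k#} * hsym (int (n - k))) \<rho> = of_nat n * lk (hsym (int n)) \<rho>"
proof -
  have "lk (\<Sum>k\<in>{1..n}. psym {#k#} * hsym (int (n - k))) \<rho> =
        (\<Sum>k\<in>{1..n}. if k \<in># \<rho> then lk (hsym (int (n - k))) (\<rho> - {#k#}) else 0)"
    by (auto simp: lookup_sum psym_def lookup_single_mult intro!: sum.cong)
  also have "\<dots> = of_nat n * lk (hsym (int n)) \<rho>"
  proof (cases "is_partition \<rho> \<and> sum_mset \<rho> = n")
    case True
    hence p: "is_partition \<rho>" and s: "sum_mset \<rho> = n" by auto
    have sub: "set_mset \<rho> \<subseteq> {1..n}" using p s mem_le_sum_mset by (force simp: is_partition_def)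
    have "(\<Sum>k\<in>{1..n}. if k \<in># \<rho> then lk (hsym (int (n - k))) (\<rho> - {#k#}) else 0)
        = (\<Sum>k\<in>{1..n}. of_nat (k * count \<rho> k) / of_nat (zee \<rho>))"
    proof (rule sum.cong)
      fix k assume k: "k \<in> {1..n}"
      show "(if k \<in># \<rho> then lk (hsym (int (n - k))) (\<rho> - {#k#}) else 0) = of_nat (k * count \<rho> k) / of_nat (zee \<rho>)"
      proof (cases "k \<in># \<rho>")
        case True
        then obtain \<sigma> where r: "\<rho> = add_mset k \<sigma>" by (metis multi_member_split)
        have rs: "\<rho> - {#k#} = \<sigma>" using r by simp
        have p': "is_partition (\<rho> - {#k#})" using p r by (auto simp: is_partition_def)
        have s': "sum_mset (\<rho> - {#k#}) = n - k" using s r by simp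
        have z: "zee \<rho> = zee (\<rho> - {#k#}) * k * count \<rho> k"
          using zee_add[of k \<sigma>] r by simp
        have z0: "0 < zee (\<rho> - {#k#})" using zee_pos[OF p'] .
        have k0: "0 < k" using k by simp
        have c0: "0 < count \<rho> k" using True by simp
        show ?thesis using True p' s' z z0 k0 c0 by (simp add: lookup_hsym)
      next
        case False
        hence c: "count \<rho> k = 0" by (simp add: not_in_iff)
        show ?thesis by (simp only: if_not_P[OF False] c)
      qed
    qed simp
    also have "\<dots> = of_nat (\<Sum>k\<in>{1..n}. k * count \<rho> k) / of_nat (zee \<rho>)"
      by (simp add: sum_divide_distrib)
    also have "(\<Sum>k\<in>{1..n}. k * count \<rho> k) = n" using sum_mset_count[OF _ sub] s by simp
    finally show ?thesis using True by (simp add: lookup_hsym)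
  next
    case False
    have "(\<Sum>k\<in>{1..n}. if k \<in># \<rho> then lk (hsym (int (n - k))) (\<rho> - {#k#}) else 0) = 0"
    proof (rule sum.neutral, rule ballI)
      fix k assume k: "k \<in> {1..n}"
      show "(if k \<in># \<rho> then lk (hsym (int (n - k))) (\<rho> - {#k#}) else 0) = 0"
      proof (cases "k \<in># \<rho>")
        case True
        then obtain \<sigma> where r: "\<rho> = add_mset k \<sigma>" by (metis multi_member_split)
        have "is_partition \<rho> = is_partition \<sigma>" using k r by (auto simp: is_partition_def)
        moreover have "sum_mset \<rho> = sum_mset \<sigma> + k" using r by simp
        ultimately have "\<not> (is_partition (\<rho> - {#k#}) \<and> sum_mset (\<rho> - {#k#}) = n - k)"
          using False k r by auto
        thus ?thesis using True by (auto simp: lookup_hsym)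
      qed simp
    qed
    thus ?thesis using False by (auto simp: lookup_hsym)
  qed
  finally show ?thesis .
qed

definition ee :: "nat multiset \<Rightarrow> nat \<Rightarrow> rat" where
  "ee \<mu> n = evalXi (hsym (int n)) \<mu>"

lemma ee_0: "ee \<mu> 0 = 1"
  by (simp add: ee_def hsym_0 evalXi_one)

lemma ee_newton: "0 < n \<Longrightarrow> of_nat n * ee \<mu> n = (\<Sum>k\<in>{1..n}. pXi \<mu> k * ee \<mu> (n - k))"
proof -
  assume n: "0 < n"
  have "evalXi (\<Sum>k\<in>{1..n}. psym {#k#} * hsym (int (n - k))) \<mu> = of_nat n * ee \<mu> n"
    unfolding ee_def by (rule evalXi_scale) (rule newton_lookup[OF n])
  thus ?thesis by (simp add: evalXi_sum evalXi_mult evalXi_psym1 ee_def)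
qed




unbundle fps_syntax

definition AA :: "nat multiset \<Rightarrow> rat fps" where "AA \<mu> = Abs_fps (ee \<mu>)"
definition CC :: "nat multiset \<Rightarrow> rat fps" where "CC \<mu> = Abs_fps (\<lambda>k. if k = 0 then 0 else pXi \<mu> k)"
definition GG :: "nat \<Rightarrow> rat fps" where "GG d = Abs_fps (\<lambda>n. if d dvd n then 1 else 0)"
definition QQ :: "nat \<Rightarrow> rat fps" where "QQ d = Abs_fps (\<lambda>k. if k = 0 then 0 else if d dvd k then of_nat d else 0)"

lemma AA_newton: "fps_X * fps_deriv (AA \<mu>) = CC \<mu> * AA \<mu>"
proof (rule fps_ext)
  fix n
  show "(fps_X * fps_deriv (AA \<mu>)) $ n = (CC \<mu> * AA \<mu>) $ n"
  proof (cases n)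
    case 0 thus ?thesis by (simp add: AA_def CC_def fps_mult_nth)
  next
    case (Suc m)
    have "(fps_X * fps_deriv (AA \<mu>)) $ n = of_nat n * ee \<mu> n" using Suc by (simp add: AA_def)
    also have "\<dots> = (\<Sum>k\<in>{1..n}. pXi \<mu> k * ee \<mu> (n - k))" by (rule ee_newton) (simp add: Suc)
    also have "\<dots> = (\<Sum>i=0..n. CC \<mu> $ i * AA \<mu> $ (n - i))"
      by (simp add: CC_def AA_def sum.atLeast_Suc_atMost)
    finally show ?thesis by (simp add: fps_mult_nth)
  qed
qed

lemma fps_ode_unique:
  fixes F H P :: "rat fps"
  assumes "fps_X * fps_deriv F = P * F" "fps_X * fps_deriv H = P * H" "P $ 0 = 0" "F $ 0 = H $ 0"
  shows "F = H"
proof -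
  define D where "D = F - H"
  have eq: "fps_X * fps_deriv D = P * D" using assms(1,2) by (simp add: D_def algebra_simps)
  have "D $ n = 0" for n
  proof (induction n rule: less_induct)
    case (less n)
    show ?case
    proof (cases n)
      case 0 thus ?thesis using assms(4) by (simp add: D_def)
    next
      case (Suc m)
      have "of_nat n * D $ n = (fps_X * fps_deriv D) $ n" using Suc by simp
      also have "\<dots> = (P * D) $ n" using eq by simp
      also have "\<dots> = (\<Sum>i=0..n. P$i * D$(n-i))" by (rule fps_mult_nth)
      also have "\<dots> = 0"
      proof (rule sum.neutral, rule ballI)
        fix i assume "i \<in> {0..n}"
        show "P$i * D$(n-i) = 0"
        proof (cases i)
          case 0 thus ?thesis using assms(3) by simp
        next
          case (Suc j)
          hence "n - i < n" using \<open>n = Suc m\<close> by simp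
          thus ?thesis using less by simp
        qed
      qed
      finally show ?thesis using Suc by simp
    qed
  qed
  hence "D = 0" by (intro fps_ext) simp
  thus ?thesis by (simp add: D_def)
qed

lemma dvd_sub_iff: "d \<le> (n::nat) \<Longrightarrow> d dvd (n - d) \<longleftrightarrow> d dvd n"
  by (metis dvd_add_right_iff dvd_refl le_add_diff_inverse)

lemma GG_inv: assumes d: "0 < d" shows "GG d * (1 - fps_X ^ d) = 1"
proof (rule fps_ext)
  fix n
  have "GG d * (1 - fps_X ^ d) = GG d - fps_X ^ d * GG d" by (simp add: algebra_simps)
  moreover have "(GG d - fps_X ^ d * GG d) $ n = (1::rat fps) $ n"
  proof (cases "n < d")
    case True
    hence "d dvd n \<longleftrightarrow> n = 0" using d by (auto dest: dvd_imp_le)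
    thus ?thesis using True by (simp add: GG_def fps_X_power_mult_nth)
  next
    case False
    thus ?thesis using d by (simp add: GG_def fps_X_power_mult_nth dvd_sub_iff)
  qed
  ultimately show "(GG d * (1 - fps_X ^ d)) $ n = (1::rat fps) $ n" by simp
qed

lemma QQ_eq: assumes d: "0 < d" shows "QQ d = fps_const (of_nat d) * (fps_X ^ d * GG d)"
proof (rule fps_ext)
  fix n
  show "QQ d $ n = (fps_const (of_nat d) * (fps_X ^ d * GG d)) $ n"
  proof (cases "n < d")
    case True
    hence "d dvd n \<longleftrightarrow> n = 0" using d by (auto dest: dvd_imp_le)
    thus ?thesis using True by (simp add: QQ_def GG_def fps_X_power_mult_nth)
  next
    case False
    thus ?thesis using d by (simp add: QQ_def GG_def fps_X_power_mult_nth dvd_sub_iff)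
  qed
qed

lemma GG_newton: assumes d: "0 < d" shows "fps_X * fps_deriv (GG d) = QQ d * GG d"
proof -
  let ?G = "GG d" and ?c = "fps_const (of_nat d) :: rat fps"
  have h1: "?G * (1 - fps_X ^ d) = 1" by (rule GG_inv[OF d])
  have "fps_deriv (?G * (1 - fps_X ^ d)) = 0" unfolding h1 by simp
  hence h3: "fps_deriv ?G * (1 - fps_X ^ d) = ?G * (?c * fps_X ^ (d - 1))"
    by (simp add: fps_deriv_power algebra_simps)
  have xp: "fps_X * fps_X ^ (d - 1) = (fps_X ^ d :: rat fps)" using d by (cases d) auto
  have "fps_X * fps_deriv ?G = fps_X * fps_deriv ?G * (?G * (1 - fps_X ^ d))" unfolding h1 by simp
  also have "\<dots> = fps_X * (fps_deriv ?G * (1 - fps_X ^ d)) * ?G" by (simp add: algebra_simps)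
  also have "\<dots> = ?c * ((fps_X * fps_X ^ (d - 1)) * ?G) * ?G" unfolding h3 by (simp add: algebra_simps)
  also have "\<dots> = QQ d * ?G" unfolding xp QQ_eq[OF d] by (simp add: algebra_simps)
  finally show ?thesis .
qed

lemma pXi_sup: "finite A \<Longrightarrow> set_mset \<mu> \<subseteq> A \<Longrightarrow> pXi \<mu> k = of_nat (\<Sum>x\<in>A. if x dvd k then x * count \<mu> x else 0)"
  unfolding pXi_def by (intro arg_cong[where f=of_nat] sum.mono_neutral_left) auto

lemma pXi_add: "pXi (add_mset d \<mu>) k = pXi \<mu> k + (if d dvd k then of_nat d else 0)"
proof -
  let ?A = "insert d (set_mset \<mu>)"
  have "pXi (add_mset d \<mu>) k = of_nat (\<Sum>x\<in>?A. if x dvd k then x * count (add_mset d \<mu>) x else 0)"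
    by (rule pXi_sup) auto
  also have "(\<Sum>x\<in>?A. if x dvd k then x * count (add_mset d \<mu>) x else 0)
     = (\<Sum>x\<in>?A. (if x dvd k then x * count \<mu> x else 0) + (if x = d then (if d dvd k then d else 0) else 0))"
    by (rule sum.cong) auto
  also have "\<dots> = (\<Sum>x\<in>?A. if x dvd k then x * count \<mu> x else 0) + (if d dvd k then d else 0)"
    by (simp add: sum.distrib sum.delta)
  also have "of_nat \<dots> = pXi \<mu> k + (if d dvd k then of_nat d else 0)"
    by (subst pXi_sup[of ?A \<mu> k]) auto
  finally show ?thesis .
qed

lemma CC_add: "CC (add_mset d \<mu>) = CC \<mu> + QQ d"
  by (rule fps_ext) (simp add: CC_def QQ_def pXi_add)

lemma AA_add: assumes d: "0 < d" shows "AA (add_mset d \<mu>) = AA \<mu> * GG d"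
proof (rule fps_ode_unique[where P = "CC (add_mset d \<mu>)"])
  show "fps_X * fps_deriv (AA (add_mset d \<mu>)) = CC (add_mset d \<mu>) * AA (add_mset d \<mu>)"
    by (rule AA_newton)
  have "fps_X * fps_deriv (AA \<mu> * GG d) = AA \<mu> * (fps_X * fps_deriv (GG d)) + (fps_X * fps_deriv (AA \<mu>)) * GG d"
    by (simp add: algebra_simps)
  also have "\<dots> = (CC \<mu> + QQ d) * (AA \<mu> * GG d)"
    unfolding GG_newton[OF d] AA_newton by (simp add: algebra_simps)
  finally show "fps_X * fps_deriv (AA \<mu> * GG d) = CC (add_mset d \<mu>) * (AA \<mu> * GG d)"
    by (simp add: CC_add)
  show "CC (add_mset d \<mu>) $ 0 = 0" by (simp add: CC_def)
  show "AA (add_mset d \<mu>) $ 0 = (AA \<mu> * GG d) $ 0" by (simp add: AA_def GG_def ee_0)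
qed

lemma ee_add:
  assumes d: "0 < d"
  shows "ee (add_mset d \<mu>) c = (\<Sum>j\<in>{j. d * j \<le> c}. ee \<mu> (c - d * j))"
proof -
  have "ee (add_mset d \<mu>) c = (AA \<mu> * GG d) $ c" unfolding AA_add[OF d, symmetric] by (simp add: AA_def)
  also have "\<dots> = (\<Sum>i=0..c. ee \<mu> i * (if d dvd (c - i) then 1 else 0))"
    by (simp add: fps_mult_nth AA_def GG_def)
  also have "\<dots> = (\<Sum>i=0..c. if d dvd (c - i) then ee \<mu> i else 0)"
    by (rule sum.cong) auto
  also have "\<dots> = (\<Sum>i\<in>{i\<in>{0..c}. d dvd (c - i)}. ee \<mu> i)"
    by (rule sum.inter_filter[symmetric]) simp
  also have "\<dots> = (\<Sum>j\<in>{j. d * j \<le> c}. ee \<mu> (c - d * j))"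
  proof (rule sum.reindex_bij_witness[where i = "\<lambda>j. c - d * j" and j = "\<lambda>i. (c - i) div d"])
    fix i assume "i \<in> {i\<in>{0..c}. d dvd (c - i)}"
    hence i: "i \<le> c" "d dvd (c - i)" by auto
    show "c - d * ((c - i) div d) = i" using i by simp
    show "(c - i) div d \<in> {j. d * j \<le> c}" using i by simp
    show "ee \<mu> (c - d * ((c - i) div d)) = ee \<mu> i" using i by simp
  next
    fix j assume "j \<in> {j. d * j \<le> c}"
    hence j: "d * j \<le> c" by simp
    show "(c - (c - d * j)) div d = j" using j d by simp
    show "c - d * j \<in> {i\<in>{0..c}. d dvd (c - i)}" using j by simp
  qed
  finally show ?thesis .
qed




definition LL :: "nat multiset \<Rightarrow> nat multiset \<Rightarrow> rat" where
  "LL S \<mu> = (\<Prod>x\<in>set_mset S. ee \<mu> (count S x))"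

lemma WW_empty: "WW {#} \<rho> = (if \<rho> = {#} then 1 else 0)"
  by (cases \<rho>) (auto simp: WW_def pXi_def)

lemma evalXi_empty: "evalXi f {#} = lk f {#}"
  unfolding evalXi_WW WW_empty by (simp add: sum.delta in_keys_iff if_distrib cong: if_cong)

lemma ee_empty: "ee {#} n = (if n = 0 then 1 else 0)"
  unfolding ee_def evalXi_empty lookup_hsym by (simp add: is_partition_def zee_def)

lemma LL_empty: "LL S {#} = (if S = {#} then 1 else 0)"
proof (cases "S = {#}")
  case True thus ?thesis by (simp add: LL_def)
next
  case False
  then obtain x where x: "x \<in># S" by (meson multiset_nonemptyE)
  hence "ee {#} (count S x) = 0" by (simp add: ee_empty)
  hence "LL S {#} = 0" unfolding LL_def using x by (intro prod_zero) auto
  thus ?thesis using False by simp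
qed

lemma LL_rec:
  assumes d: "0 < d"
  shows "LL S (add_mset d \<mu>) = (\<Sum>B\<in>{B. repeat_mset d B \<subseteq># S}. LL (S - repeat_mset d B) \<mu>)"
proof -
  let ?J = "\<lambda>x. {j. d * j \<le> count S x}"
  let ?T = "{B. repeat_mset d B \<subseteq># S}"
  have finJ: "finite (?J x)" for x
  proof (rule finite_subset[of _ "{..count S x}"])
    show "?J x \<subseteq> {..count S x}"
    proof
      fix j assume "j \<in> ?J x"
      hence "d * j \<le> count S x" by simp
      moreover have "j \<le> d * j" using d by simp
      ultimately show "j \<in> {..count S x}" by (simp only: atMost_iff)
    qed
  qed simp
  have "LL S (add_mset d \<mu>) = (\<Prod>x\<in>set_mset S. \<Sum>j\<in>?J x. ee \<mu> (count S x - d * j))"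
    unfolding LL_def ee_add[OF d] ..
  also have "\<dots> = (\<Sum>g\<in>PiE (set_mset S) ?J. \<Prod>x\<in>set_mset S. ee \<mu> (count S x - d * g x))"
    by (rule prod_sum_PiE) (auto simp: finJ)
  also have "\<dots> = (\<Sum>B\<in>?T. \<Prod>x\<in>set_mset S. ee \<mu> (count S x - d * count B x))"
  proof (rule sum.reindex_bij_witness[where j = "\<lambda>g. \<Sum>x\<in>set_mset S. replicate_mset (g x) x"
        and i = "\<lambda>B. restrict (count B) (set_mset S)"])
    fix g assume g: "g \<in> PiE (set_mset S) ?J"
    have cnt: "count (\<Sum>x\<in>set_mset S. replicate_mset (g x) x) y = (if y \<in># S then g y else 0)" for y
      by (simp add: count_sum sum.delta if_distrib cong: if_cong)
    show "restrict (count (\<Sum>x\<in>set_mset S. replicate_mset (g x) x)) (set_mset S) = g"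
      using g by (auto simp: cnt fun_eq_iff PiE_def extensional_def)
    show "(\<Sum>x\<in>set_mset S. replicate_mset (g x) x) \<in> ?T"
      using g by (auto simp: subseteq_mset_def cnt PiE_def Pi_def)
    show "(\<Prod>x\<in>set_mset S. ee \<mu> (count S x - d * count (\<Sum>x\<in>set_mset S. replicate_mset (g x) x) x))
        = (\<Prod>x\<in>set_mset S. ee \<mu> (count S x - d * g x))"
      by (rule prod.cong) (auto simp: cnt)
  next
    fix B assume B: "B \<in> ?T"
    hence le: "d * count B y \<le> count S y" for y by (auto simp: subseteq_mset_def)
    have sub: "y \<in># S" if "count B y > 0" for y
    proof -
      have "0 < d * count B y" using d that by simp
      hence "0 < count S y" using le[of y] by linarith
      thus ?thesis by simp
    qed
    show "(\<Sum>x\<in>set_mset S. replicate_mset (restrict (count B) (set_mset S) x) x) = B"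
    proof (rule multiset_eqI)
      fix y
      show "count (\<Sum>x\<in>set_mset S. replicate_mset (restrict (count B) (set_mset S) x) x) y = count B y"
      proof -
        have z: "y \<notin># S \<Longrightarrow> count B y = 0" using sub[of y] by (metis gr0I)
        show ?thesis using z by (auto simp: count_sum sum.delta if_distrib cong: if_cong)
      qed
    qed
    show "restrict (count B) (set_mset S) \<in> PiE (set_mset S) ?J" using le by auto
  qed
  also have "\<dots> = (\<Sum>B\<in>?T. LL (S - repeat_mset d B) \<mu>)"
  proof (rule sum.cong)
    fix B assume B: "B \<in> ?T"
    hence le: "d * count B y \<le> count S y" for y by (auto simp: subseteq_mset_def)
    have "LL (S - repeat_mset d B) \<mu> = (\<Prod>x\<in>set_mset (S - repeat_mset d B). ee \<mu> (count S x - d * count B x))"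
      unfolding LL_def by simp
    also have "\<dots> = (\<Prod>x\<in>set_mset S. ee \<mu> (count S x - d * count B x))"
    proof (rule prod.mono_neutral_left)
      show "set_mset (S - repeat_mset d B) \<subseteq> set_mset S" by (meson diff_subset_eq_self set_mset_mono)
      show "\<forall>x\<in>set_mset S - set_mset (S - repeat_mset d B). ee \<mu> (count S x - d * count B x) = 1"
        by (auto simp: ee_0 in_diff_count)
    qed simp
    finally show "(\<Prod>x\<in>set_mset S. ee \<mu> (count S x - d * count B x)) = LL (S - repeat_mset d B) \<mu>" ..
  qed simp
  finally show ?thesis .
qed

lemma LL_RR: "is_partition \<mu> \<Longrightarrow> LL S \<mu> = RR S \<mu>"
proof (induction \<mu> arbitrary: S)
  case empty thus ?case by (simp add: LL_empty RR_empty)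
next
  case (add d \<mu>)
  hence d: "0 < d" and p: "is_partition \<mu>" by (auto simp: is_partition_def)
  show ?case using add.IH[OF p] by (simp add: LL_rec[OF d] RR_rec[OF d])
qed

lemma count_content: "count (content_mset lam) x = (if 0 < x \<and> x \<le> length lam then lam ! (x - 1) else 0)"
proof -
  have "count (content_mset lam) x = (\<Sum>i<length lam. if i = x - 1 \<and> 0 < x then lam ! i else 0)"
    unfolding content_mset_def count_sum by (rule sum.cong) auto
  also have "\<dots> = (if 0 < x \<and> x \<le> length lam then lam ! (x - 1) else 0)"
    by (cases "0 < x") (auto simp: sum.delta)
  finally show ?thesis .
qed

lemma prod_list_LL: "(\<Prod>k\<leftarrow>lam. ee \<mu> k) = LL (content_mset lam) \<mu>"
proof -
  let ?C = "content_mset lam"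
  have "(\<Prod>k\<leftarrow>lam. ee \<mu> k) = (\<Prod>i\<in>{0..<length lam}. ee \<mu> (lam ! i))"
    by (simp add: prod.list_conv_set_nth)
  also have "\<dots> = (\<Prod>x\<in>{1..length lam}. ee \<mu> (count ?C x))"
    by (rule prod.reindex_bij_witness[where i = "\<lambda>x. x - 1" and j = Suc]) (auto simp: count_content)
  also have "\<dots> = (\<Prod>x\<in>set_mset ?C. ee \<mu> (count ?C x))"
  proof (rule prod.mono_neutral_right)
    show "set_mset ?C \<subseteq> {1..length lam}"
    proof
      fix x assume "x \<in># ?C"
      hence "count ?C x \<noteq> 0" by simp
      thus "x \<in> {1..length lam}" unfolding count_content by (auto split: if_splits)
    qed
    show "\<forall>i\<in>{1..length lam} - set_mset ?C. ee \<mu> (count ?C i) = 1"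
      by (auto simp: ee_0 not_in_iff)
  qed simp
  finally show ?thesis unfolding LL_def .
qed

theorem theorem2:
  fixes lam :: "nat list" and \<mu> :: "nat multiset"
  assumes "sorted_wrt (\<ge>) lam" and "\<forall>x\<in>set lam. 0 < x"
    and "is_partition \<mu>"
  shows "evalXi (\<Prod>k\<leftarrow>lam. hsym (int k)) \<mu>
       = (\<Sum>\<pi>\<in>multiset_partitions (content_mset lam). Hcoef (mtilde \<pi>) \<mu>)"
proof -
  have "evalXi (\<Prod>k\<leftarrow>lam. hsym (int k)) \<mu> = (\<Prod>k\<leftarrow>lam. ee \<mu> k)"
    by (simp add: evalXi_prod_list ee_def)
  also have "\<dots> = LL (content_mset lam) \<mu>" by (rule prod_list_LL)
  also have "\<dots> = RR (content_mset lam) \<mu>" by (rule LL_RR[OF assms(3)])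
  also have "\<dots> = (\<Sum>\<pi>\<in>multiset_partitions (content_mset lam). Hcoef (mtilde \<pi>) \<mu>)"
    by (simp add: RR_def Hcoef_mtilde)
  finally show ?thesis .
qed


end
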